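(* Under the hypotheses and notation of the setting below (anonymous polymatrix game, arbitrary joint action history $(a_l)_{0\le l\le k}$, beliefs $\hat\pi$ and aggregate beliefs $\hat\mu$ built with the same step sizes), for every $k\ge0$ and agent $i$, the maps $a^i\mapsto\bar R^i(a^i,\hat\mu^i_k)$ and $a^i\mapsto R^i(a^i,\hat\pi^{-i}_k)$ have the same set of maximizers over $\mathbb{A}$. Consequently, any deterministic rule that maps each agent's vector of expected rewards $(\cdot)_{a^i\in\mathbb{A}}$ to an action produces the same joint action $a_{k+1}$ whether applied to $(\bar R^i(\cdot,\hat\mu^i_k))_{i}$ or to $(R^i(\cdot,\hat\pi^{-i}_k))_{i}$.
   Context: Setting: $\mathcal{G}$ is an $N$-player game that is polymatrix ($r^i(a^i,a^{-i})=\sum_{j\neq i}r^{ij}(a^i,a^j)$) and anonymous (common action set $\mathbb{A}$ with $|\mathbb{A}|=n$, rewards invariant under permutations of $a^{-i}$). $\bar r^i:\mathbb{A}\times\mathbb{X}\to\mathbb{R}$ satisfies $r^i(a^i,a^{-i})=\bar r^i(a^i,\sigma(a^{-i}))$, where $\sigma(a^{-i})=\sum_{j\ne i}\mathds{1}\{a^j\}$ and $\mathbb{X}=\{\xi\in\mathbb{N}^n:\sum_l\xi_l=N-1\}$. Given step sizes $(\alpha_k)_{k\ge1}$ and a joint action sequence $(a_l)$: $\hat\pi^j_0=\mathds{1}\{a^j_0\}$, $\hat\pi^j_k=\hat\pi^j_{k-1}+\alpha_k(\mathds{1}\{a^j_k\}-\hat\pi^j_{k-1})$; $\hat\mu^i_0=\mathds{1}\{\sigma(a^{-i}_0)\}$,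 $\hat\mu^i_k=\hat\mu^i_{k-1}+\alpha_k(\mathds{1}\{\sigma(a^{-i}_k)\}-\hat\mu^i_{k-1})$. $R^i(a^i,\pi^{-i})=\sum_{a^{-i}}r^i(a^i,a^{-i})\prod_{j\ne i}\pi^j(a^j)$, $\bar R^i(a^i,\mu)=\sum_{x\in\mathbb{X}}\bar r^i(a^i,x)\mu(x)$. *)

theory Defs
  imports Complex_Main "HOL-Combinatorics.Permutations"
begin

text \<open>Players form a finite type 'p (N = CARD('p)); actions form a finite type 'a
  (the common action set, n = CARD('a)). A joint action is a profile 'p \<Rightarrow> 'a.\<close>

definition indic :: "'x \<Rightarrow> 'x \<Rightarrow> real" where
  "indic x0 = (\<lambda>x. if x = x0 then 1 else 0)"

definition sigma :: "'p::finite \<Rightarrow> ('p \<Rightarrow> 'a) \<Rightarrow> ('a \<Rightarrow> nat)" where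
  "sigma i b = (\<lambda>l. card {j. j \<noteq> i \<and> b j = l})"

definition Xset :: "nat \<Rightarrow> ('a::finite \<Rightarrow> nat) set" where
  "Xset N = {\<xi>. (\<Sum>l\<in>UNIV. \<xi> l) = N - 1}"

definition polymatrix :: "('p::finite \<Rightarrow> ('p \<Rightarrow> 'a) \<Rightarrow> real) \<Rightarrow> bool" where
  "polymatrix r \<longleftrightarrow> (\<exists>rr :: 'p \<Rightarrow> 'p \<Rightarrow> 'a \<Rightarrow> 'a \<Rightarrow> real.
      \<forall>i b. r i b = (\<Sum>j\<in>UNIV - {i}. rr i j (b i) (b j)))"

definition anonymous :: "('p::finite \<Rightarrow> ('p \<Rightarrow> 'a) \<Rightarrow> real) \<Rightarrow> bool" where
  "anonymous r \<longleftrightarrow> (\<forall>i b p. p permutes (UNIV - {i}) \<longrightarrow> r i (b \<circ> p) = r i b)"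

primrec pihat :: "(nat \<Rightarrow> real) \<Rightarrow> (nat \<Rightarrow> 'p \<Rightarrow> 'a) \<Rightarrow> 'p \<Rightarrow> nat \<Rightarrow> 'a \<Rightarrow> real" where
  "pihat \<alpha> a j 0 = indic (a 0 j)"
| "pihat \<alpha> a j (Suc k) = (\<lambda>x. pihat \<alpha> a j k x + \<alpha> (Suc k) * (indic (a (Suc k) j) x - pihat \<alpha> a j k x))"

primrec muhat :: "(nat \<Rightarrow> real) \<Rightarrow> (nat \<Rightarrow> 'p::finite \<Rightarrow> 'a) \<Rightarrow> 'p \<Rightarrow> nat \<Rightarrow> ('a \<Rightarrow> nat) \<Rightarrow> real" where
  "muhat \<alpha> a i 0 = indic (sigma i (a 0))"
| "muhat \<alpha> a i (Suc k) = (\<lambda>x. muhat \<alpha> a i k x + \<alpha> (Suc k) * (indic (sigma i (a (Suc k))) x - muhat \<alpha> a i k x))"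

text \<open>R^i(a^i, pi^{-i}): sum over a^{-i}, encoded as profiles b with b i = a^i.\<close>
definition Rexp :: "('p::finite \<Rightarrow> ('p \<Rightarrow> 'a::finite) \<Rightarrow> real) \<Rightarrow> 'p \<Rightarrow> 'a \<Rightarrow> ('p \<Rightarrow> 'a \<Rightarrow> real) \<Rightarrow> real" where
  "Rexp r i ai \<pi> = (\<Sum>b\<in>{b. b i = ai}. r i b * (\<Prod>j\<in>UNIV - {i}. \<pi> j (b j)))"

definition Rbar :: "('p::finite \<Rightarrow> 'a::finite \<Rightarrow> ('a \<Rightarrow> nat) \<Rightarrow> real) \<Rightarrow> 'p \<Rightarrow> 'a \<Rightarrow> (('a \<Rightarrow> nat) \<Rightarrow> real) \<Rightarrow> real" where
  "Rbar rb i ai \<mu> = (\<Sum>x\<in>Xset (card (UNIV :: 'p set)). rb i ai x * \<mu> x)"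

definition argmaxset :: "('a::finite \<Rightarrow> real) \<Rightarrow> 'a set" where
  "argmaxset f = {x. \<forall>y. f y \<le> f x}"

end

theory Submission
  imports Defs "HOL-Library.FuncSet"
begin

lemma sum_indic_fin: "finite A \<Longrightarrow> x0 \<in> A \<Longrightarrow> (\<Sum>x\<in>A. c x * indic x0 x) = c x0"
  by (simp add: indic_def if_distrib sum.delta cong: if_cong)

lemma sum_indic: "(\<Sum>x\<in>(UNIV::'a::finite set). c x * indic x0 x) = c x0"
  by (rule sum_indic_fin) auto

lemma pihat_mass: "(\<Sum>c\<in>(UNIV::'a::finite set). pihat \<alpha> a j k c) = 1"
proof (induction k)
  case 0
  then show ?case by (simp add: indic_def)
next
  case (Suc k)
  have "(\<Sum>c\<in>(UNIV::'a set). indic (a (Suc k) j) c) = 1" by (simp add: indic_def)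
  then show ?case using Suc
    by (simp add: sum.distrib sum_subtractf sum_distrib_left[symmetric])
qed

lemma Xset_finite: "finite (Xset N :: ('a::finite \<Rightarrow> nat) set)"
proof -
  have "Xset N \<subseteq> PiE (UNIV::'a set) (\<lambda>_. {..N})"
  proof
    fix \<xi> :: "'a \<Rightarrow> nat" assume "\<xi> \<in> Xset N"
    hence s: "(\<Sum>l\<in>UNIV. \<xi> l) = N - 1" by (simp add: Xset_def)
    have "\<xi> l \<le> N" for l
    proof -
      have "\<xi> l \<le> (\<Sum>l\<in>UNIV. \<xi> l)" by (rule member_le_sum) auto
      thus ?thesis using s by simp
    qed
    thus "\<xi> \<in> PiE UNIV (\<lambda>_. {..N})" by (simp add: PiE_UNIV_domain)
  qed
  moreover have "finite (PiE (UNIV::'a set) (\<lambda>_. {..N}))" by (rule finite_PiE) auto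
  ultimately show ?thesis by (rule finite_subset)
qed

lemma sigma_in_Xset: fixes i :: "'p::finite" and b :: "'p \<Rightarrow> 'a::finite" shows "sigma i b \<in> Xset (card (UNIV :: 'p::finite set))"
proof -
  have "(\<Sum>l\<in>UNIV. card {j. j \<noteq> i \<and> b j = l}) = card (\<Union>l\<in>UNIV. {j. j \<noteq> i \<and> b j = l})"
    by (rule card_UN_disjoint[symmetric]) auto
  also have "(\<Union>l\<in>UNIV. {j. j \<noteq> i \<and> b j = l}) = UNIV - {i}" by auto
  also have "card ((UNIV::'p set) - {i}) = card (UNIV :: 'p set) - 1" by (simp add: card_Diff_singleton)
  finally show ?thesis by (simp add: Xset_def sigma_def)
qed

lemma sigma_upd: "sigma i (b(i:=x)) = sigma i b"
  unfolding sigma_def by (rule ext, rule arg_cong[where f=card], auto)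

lemma Rbar_side:
  fixes rb :: "'p::finite \<Rightarrow> 'a::finite \<Rightarrow> ('a \<Rightarrow> nat) \<Rightarrow> real"
    and rr :: "'p \<Rightarrow> 'a \<Rightarrow> 'a \<Rightarrow> real" and a :: "nat \<Rightarrow> 'p \<Rightarrow> 'a"
  assumes h: "\<And>b. rb i ai (sigma i b) = (\<Sum>j\<in>UNIV - {i}. rr j ai (b j))"
  shows "Rbar rb i ai (muhat \<alpha> a i k) = (\<Sum>j\<in>UNIV - {i}. \<Sum>c\<in>UNIV. rr j ai c * pihat \<alpha> a j k c)"
proof (induction k)
  case 0
  show ?case
    by (simp add: Rbar_def sum_indic_fin Xset_finite sigma_in_Xset h sum_indic)
next
  case (Suc k)
  have e1: "(\<Sum>x\<in>Xset (card (UNIV :: 'p set)). rb i ai x * indic (sigma i (a (Suc k))) x)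
      = rb i ai (sigma i (a (Suc k)))"
    by (simp add: sum_indic_fin Xset_finite sigma_in_Xset)
  have "Rbar rb i ai (muhat \<alpha> a i (Suc k)) = Rbar rb i ai (muhat \<alpha> a i k)
     + \<alpha> (Suc k) * (rb i ai (sigma i (a (Suc k))) - Rbar rb i ai (muhat \<alpha> a i k))"
    unfolding Rbar_def e1[symmetric]
    by (simp add: algebra_simps sum.distrib sum_subtractf sum_distrib_left)
  also have "\<dots> = (\<Sum>j\<in>UNIV - {i}. \<Sum>c\<in>UNIV. rr j ai c * pihat \<alpha> a j (Suc k) c)"
  proof -
    have ind: "\<And>j. (\<Sum>c\<in>UNIV. rr j ai c * indic (a (Suc k) j) c) = rr j ai (a (Suc k) j)"
      by (rule sum_indic)
    have inner: "\<And>j. (\<Sum>c\<in>UNIV. rr j ai c * pihat \<alpha> a j (Suc k) c)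
       = (\<Sum>c\<in>UNIV. rr j ai c * pihat \<alpha> a j k c) + \<alpha> (Suc k) * (rr j ai (a (Suc k) j) - (\<Sum>c\<in>UNIV. rr j ai c * pihat \<alpha> a j k c))"
      unfolding ind[symmetric]
      by (simp add: algebra_simps sum.distrib sum_subtractf sum_distrib_left)
    show ?thesis
      unfolding Suc h inner
      by (simp add: sum.distrib sum_subtractf sum_distrib_left right_diff_distrib)
  qed
  finally show ?case .
qed

lemma Rexp_side:
  fixes r :: "'p::finite \<Rightarrow> ('p \<Rightarrow> 'a::finite) \<Rightarrow> real"
    and rr :: "'p \<Rightarrow> 'a \<Rightarrow> 'a \<Rightarrow> real" and \<pi> :: "'p \<Rightarrow> 'a \<Rightarrow> real"
  assumes h: "\<And>b. r i b = (\<Sum>j\<in>UNIV - {i}. rr j (b i) (b j))"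
    and mass: "\<And>j. (\<Sum>c\<in>UNIV. \<pi> j c) = 1"
  shows "Rexp r i ai \<pi> = (\<Sum>j\<in>UNIV - {i}. \<Sum>c\<in>UNIV. rr j ai c * \<pi> j c)"
proof -
  define T where "T = (UNIV::'p set) - {i}"
  have bij: "bij_betw (\<lambda>g. g(i:=ai)) (PiE T (\<lambda>_. UNIV)) {b. b i = ai}"
  proof (rule bij_betw_byWitness[where f' = "\<lambda>b. restrict b T"])
    show "\<forall>g\<in>PiE T (\<lambda>_. UNIV). restrict (g(i := ai)) T = g"
      by (auto simp: T_def PiE_def extensional_def restrict_def)
    show "\<forall>b\<in>{b. b i = ai}. (restrict b T)(i := ai) = b"
      by (auto simp: T_def restrict_def)
    show "(\<lambda>g. g(i := ai)) ` PiE T (\<lambda>_. UNIV) \<subseteq> {b. b i = ai}" by auto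
    show "(\<lambda>b. restrict b T) ` {b. b i = ai} \<subseteq> PiE T (\<lambda>_. UNIV)" by auto
  qed
  have iT: "i \<notin> T" by (simp add: T_def)
  have "Rexp r i ai \<pi> = (\<Sum>g\<in>PiE T (\<lambda>_. UNIV). r i (g(i:=ai)) * (\<Prod>j'\<in>T. \<pi> j' ((g(i:=ai)) j')))"
    unfolding Rexp_def T_def[symmetric]
    by (rule sum.reindex_bij_betw[OF bij, symmetric])
  also have "\<dots> = (\<Sum>g\<in>PiE T (\<lambda>_. UNIV). \<Sum>j\<in>T. rr j ai (g j) * (\<Prod>j'\<in>T. \<pi> j' (g j')))"
  proof (rule sum.cong[OF refl])
    fix g :: "'p \<Rightarrow> 'a" assume "g \<in> PiE T (\<lambda>_. UNIV)"
    have p: "(\<Prod>j'\<in>T. \<pi> j' ((g(i:=ai)) j')) = (\<Prod>j'\<in>T. \<pi> j' (g j'))"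
      by (rule prod.cong) (auto simp: T_def)
    have s: "r i (g(i:=ai)) = (\<Sum>j\<in>T. rr j ai (g j))"
      unfolding h T_def by (rule sum.cong) auto
    show "r i (g(i:=ai)) * (\<Prod>j'\<in>T. \<pi> j' ((g(i:=ai)) j')) = (\<Sum>j\<in>T. rr j ai (g j) * (\<Prod>j'\<in>T. \<pi> j' (g j')))"
      unfolding p s by (simp add: sum_distrib_right)
  qed
  also have "\<dots> = (\<Sum>j\<in>T. \<Sum>g\<in>PiE T (\<lambda>_. UNIV). rr j ai (g j) * (\<Prod>j'\<in>T. \<pi> j' (g j')))"
    by (rule sum.swap)
  also have "\<dots> = (\<Sum>j\<in>T. \<Sum>c\<in>UNIV. rr j ai c * \<pi> j c)"
  proof (rule sum.cong[OF refl])
    fix j assume jT: "j \<in> T"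
    define f where "f = (\<lambda>j' c. if j' = j then rr j ai c * \<pi> j c else \<pi> j' c)"
    have "(\<Sum>g\<in>PiE T (\<lambda>_. UNIV). rr j ai (g j) * (\<Prod>j'\<in>T. \<pi> j' (g j')))
        = (\<Sum>g\<in>PiE T (\<lambda>_. UNIV). \<Prod>j'\<in>T. f j' (g j'))"
    proof (rule sum.cong[OF refl])
      fix g :: "'p \<Rightarrow> 'a"
      have "(\<Prod>j'\<in>T. f j' (g j')) = f j (g j) * (\<Prod>j'\<in>T - {j}. f j' (g j'))"
        using jT by (simp add: prod.remove)
      also have "\<dots> = rr j ai (g j) * (\<pi> j (g j) * (\<Prod>j'\<in>T - {j}. \<pi> j' (g j')))"
        by (simp add: f_def)
      also have "\<dots> = rr j ai (g j) * (\<Prod>j'\<in>T. \<pi> j' (g j'))"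
        using jT by (simp add: prod.remove)
      finally show "rr j ai (g j) * (\<Prod>j'\<in>T. \<pi> j' (g j')) = (\<Prod>j'\<in>T. f j' (g j'))" by simp
    qed
    also have "\<dots> = (\<Prod>j'\<in>T. \<Sum>c\<in>UNIV. f j' c)"
      by (rule prod_sum_PiE[symmetric]) auto
    also have "\<dots> = (\<Sum>c\<in>UNIV. f j c) * (\<Prod>j'\<in>T - {j}. \<Sum>c\<in>UNIV. f j' c)"
      using jT by (simp add: prod.remove)
    also have "\<dots> = (\<Sum>c\<in>UNIV. rr j ai c * \<pi> j c)"
      by (simp add: f_def mass)
    finally show "(\<Sum>g\<in>PiE T (\<lambda>_. UNIV). rr j ai (g j) * (\<Prod>j'\<in>T. \<pi> j' (g j'))) = (\<Sum>c\<in>UNIV. rr j ai c * \<pi> j c)" .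
  qed
  finally show ?thesis by (simp add: T_def)
qed

theorem corollary1:
  fixes r :: "'p::finite \<Rightarrow> ('p \<Rightarrow> 'a::finite) \<Rightarrow> real"
    and rb :: "'p \<Rightarrow> 'a \<Rightarrow> ('a \<Rightarrow> nat) \<Rightarrow> real"
    and \<alpha> :: "nat \<Rightarrow> real"
    and a :: "nat \<Rightarrow> 'p \<Rightarrow> 'a"
  assumes poly: "polymatrix r"
    and anon: "anonymous r"
    and rbar: "\<forall>i b. r i b = rb i (b i) (sigma i b)"
  shows "\<forall>k i. argmaxset (\<lambda>ai. Rbar rb i ai (muhat \<alpha> a i k))
              = argmaxset (\<lambda>ai. Rexp r i ai (\<lambda>j. pihat \<alpha> a j k)) \<and>
         (\<forall>D :: 'p \<Rightarrow> ('a \<Rightarrow> real) \<Rightarrow> 'a.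
            (\<lambda>i. D i (\<lambda>ai. Rbar rb i ai (muhat \<alpha> a i k)))
          = (\<lambda>i. D i (\<lambda>ai. Rexp r i ai (\<lambda>j. pihat \<alpha> a j k))))"
proof -
  obtain rr :: "'p \<Rightarrow> 'p \<Rightarrow> 'a \<Rightarrow> 'a \<Rightarrow> real" where
    rr: "\<And>i b. r i b = (\<Sum>j\<in>UNIV - {i}. rr i j (b i) (b j))"
    using poly unfolding polymatrix_def by blast
  have eq: "(\<lambda>ai. Rbar rb i ai (muhat \<alpha> a i k)) = (\<lambda>ai. Rexp r i ai (\<lambda>j. pihat \<alpha> a j k))" for i k
  proof
    fix ai
    have h: "rb i ai (sigma i b) = (\<Sum>j\<in>UNIV - {i}. rr i j ai (b j))" for b
    proof -
      have "rb i ai (sigma i b) = r i (b(i:=ai))" using rbar by (simp add: sigma_upd)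
      also have "\<dots> = (\<Sum>j\<in>UNIV - {i}. rr i j ai (b j))" unfolding rr
        by (rule sum.cong) auto
      finally show ?thesis .
    qed
    show "Rbar rb i ai (muhat \<alpha> a i k) = Rexp r i ai (\<lambda>j. pihat \<alpha> a j k)"
      using Rbar_side[where rr = "rr i" and rb = rb and i = i and ai = ai and \<alpha> = \<alpha> and a = a and k = k, OF h] Rexp_side[where rr = "rr i" and r = r and i = i and ai = ai and \<pi> = "\<lambda>j. pihat \<alpha> a j k", OF rr[of i] pihat_mass]
      by simp
  qed
  show ?thesis using eq by simp
qed

end
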